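(* Let $\mathfrak{A}[\tau]$ be a topological partial *-algebra with multiplication core $\mathfrak{B}$, and let $\omega$ be a $\tau$-continuous, $\mathfrak{B}$-positive linear functional on $\mathfrak{A}$. Then the map $\lambda^0_\omega:a\in\mathfrak{B}\mapsto\lambda^0_\omega(a)\in\mathcal{H}_\omega$ is $\tau^*$-closable; that is, whenever $\{a_\delta\}\subset\mathfrak{B}$ is a net with $a_\delta\to0$ in $\tau^*$ and $\{\lambda^0_\omega(a_\delta)\}$ is a Cauchy net in $\mathcal{H}_\omega$, then $\lambda^0_\omega(a_\delta)\to0$.
   Context: A partial *-algebra is a complex vector space $\mathfrak{A}$ with conjugate-linear involution and distributive partial multiplication on $\Gamma\subset\mathfrak{A}\times\mathfrak{A}$ with $(x,y)\in\Gamma$ iff $(y^*,x^* )\in\Gamma$, then $(xy)^*=y^*x^*$; $R(x)=\{y:(x,y)\in\Gamma\}$; $R\mathfrak{A}$ is the set of universal right multipliers. A topological partial *-algebra: Hausdorff locally convex topology $\tau$ such that each map $y\in R(x)\mapsto xy$ is closed (if $y_\alpha\in R(x)$, $y_\alpha\to y$, $xy_\alpha\to z$, then $y\in R(x)$, $z=xy$). $\tau^*$ is the topology given by the seminorms $\max\{p(x),p(x^* )\}$, $p$ a $\tau$-continuous seminorm. A multiplication core is a subspace $\mathfrak{B}\subseteq R\mathfrak{A}$ with: $e\in\mathfrak{B}$ if $\mathfrak{A}$ has a unit $e$; $\mathfrak{B}\mathfrak{B}\subseteq\mathfrak{B}$; $\mathfrak{B}$ $\tau^*$-dense in $\mathfrak{A}$;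 $x\mapsto xb$ $\tau$-continuous for $b\in\mathfrak{B}$; $b^*(xc)=(b^*x)c$ for $x\in\mathfrak{A}$, $b,c\in\mathfrak{B}$. A linear functional $\omega$ is $\mathfrak{B}$-positive if $\omega(a^*a)\ge0$ for all $a\in\mathfrak{B}$. Then $N_\omega=\{x\in\mathfrak{B}:\omega(y^*x)=0\ \forall y\in\mathfrak{B}\}$, $\lambda^0_\omega(x)=x+N_\omega$ ($x\in\mathfrak{B}$), and $\mathcal{H}_\omega$ is the Hilbert space completion of $\mathfrak{B}/N_\omega$ with inner product $\langle\lambda^0_\omega(x),\lambda^0_\omega(y)\rangle=\omega(y^*x)$. *)

theory Defs
  imports "HOL-Analysis.Analysis"
begin

text \<open>The involution is invl, the partial multiplication is mul, which is only
meaningful on the set Gam of composable pairs.\<close>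

definition partial_star_algebra ::
  "(complex \<Rightarrow> 'a::ab_group_add \<Rightarrow> 'a) \<Rightarrow> ('a \<Rightarrow> 'a) \<Rightarrow> ('a \<times> 'a) set \<Rightarrow> ('a \<Rightarrow> 'a \<Rightarrow> 'a) \<Rightarrow> bool"
  where "partial_star_algebra sc invl Gam mul \<longleftrightarrow>
     vector_space sc \<and>
     (\<forall>x y. invl (x + y) = invl x + invl y) \<and>
     (\<forall>c x. invl (sc c x) = sc (cnj c) (invl x)) \<and>
     (\<forall>x. invl (invl x) = x) \<and>
     (\<forall>x y. (x, y) \<in> Gam \<longleftrightarrow> (invl y, invl x) \<in> Gam) \<and>
     (\<forall>x y. (x, y) \<in> Gam \<longrightarrow> invl (mul x y) = mul (invl y) (invl x)) \<and>
     (\<forall>x y z c d. (x, y) \<in> Gam \<and> (x, z) \<in> Gam \<longrightarrow>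
        (x, sc c y + sc d z) \<in> Gam \<and> mul x (sc c y + sc d z) = sc c (mul x y) + sc d (mul x z)) \<and>
     (\<forall>x y z c d. (y, x) \<in> Gam \<and> (z, x) \<in> Gam \<longrightarrow>
        (sc c y + sc d z, x) \<in> Gam \<and> mul (sc c y + sc d z) x = sc c (mul y x) + sc d (mul z x))"

definition right_mult :: "('a \<times> 'a) set \<Rightarrow> 'a \<Rightarrow> 'a set"
  where "right_mult Gam x = {y. (x, y) \<in> Gam}"

definition univ_right_mult :: "('a \<times> 'a) set \<Rightarrow> 'a set"
  where "univ_right_mult Gam = {y. \<forall>x. (x, y) \<in> Gam}"

definition is_unit :: "('a \<times> 'a) set \<Rightarrow> ('a \<Rightarrow> 'a \<Rightarrow> 'a) \<Rightarrow> 'a \<Rightarrow> bool"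
  where "is_unit Gam mul e \<longleftrightarrow>
     (\<forall>x. (x, e) \<in> Gam \<and> (e, x) \<in> Gam \<and> mul x e = x \<and> mul e x = x)"

definition seminorm_on :: "(complex \<Rightarrow> 'a::ab_group_add \<Rightarrow> 'a) \<Rightarrow> ('a \<Rightarrow> real) \<Rightarrow> bool"
  where "seminorm_on sc p \<longleftrightarrow>
     (\<forall>x y. p (x + y) \<le> p x + p y) \<and> (\<forall>c x. p (sc c x) = norm c * p x)"

definition seminorm_topology :: "('a::ab_group_add \<Rightarrow> real) set \<Rightarrow> 'a topology"
  where "seminorm_topology P = topology (\<lambda>U. \<forall>x\<in>U. \<exists>Q e. finite Q \<and> Q \<subseteq> P \<and> e > 0 \<and>
            {y. \<forall>q\<in>Q. q (y - x) < e} \<subseteq> U)"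

definition locally_convex_topology :: "(complex \<Rightarrow> 'a::ab_group_add \<Rightarrow> 'a) \<Rightarrow> 'a topology \<Rightarrow> bool"
  where "locally_convex_topology sc T \<longleftrightarrow>
     (\<exists>P. (\<forall>p\<in>P. seminorm_on sc p) \<and> T = seminorm_topology P) \<and> Hausdorff_space T"

definition topological_partial_star_algebra ::
  "(complex \<Rightarrow> 'a::ab_group_add \<Rightarrow> 'a) \<Rightarrow> ('a \<Rightarrow> 'a) \<Rightarrow> ('a \<times> 'a) set \<Rightarrow> ('a \<Rightarrow> 'a \<Rightarrow> 'a)
     \<Rightarrow> 'a topology \<Rightarrow> bool"
  where "topological_partial_star_algebra sc invl Gam mul T \<longleftrightarrow>
     partial_star_algebra sc invl Gam mul \<and> locally_convex_topology sc T \<and>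
     (\<forall>x. closedin (prod_topology T T) {(y, mul x y) | y. y \<in> right_mult Gam x})"

definition tau_star :: "(complex \<Rightarrow> 'a::ab_group_add \<Rightarrow> 'a) \<Rightarrow> ('a \<Rightarrow> 'a) \<Rightarrow> 'a topology \<Rightarrow> 'a topology"
  where "tau_star sc invl T = seminorm_topology
     {(\<lambda>x. max (p x) (p (invl x))) | p. seminorm_on sc p \<and> continuous_map T euclideanreal p}"

definition multiplication_core ::
  "(complex \<Rightarrow> 'a::ab_group_add \<Rightarrow> 'a) \<Rightarrow> ('a \<Rightarrow> 'a) \<Rightarrow> ('a \<times> 'a) set \<Rightarrow> ('a \<Rightarrow> 'a \<Rightarrow> 'a)
     \<Rightarrow> 'a topology \<Rightarrow> 'a set \<Rightarrow> bool"
  where "multiplication_core sc invl Gam mul T B \<longleftrightarrow>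
     B \<subseteq> univ_right_mult Gam \<and>
     0 \<in> B \<and> (\<forall>x\<in>B. \<forall>y\<in>B. x + y \<in> B) \<and> (\<forall>c. \<forall>x\<in>B. sc c x \<in> B) \<and>
     (\<forall>e. is_unit Gam mul e \<longrightarrow> e \<in> B) \<and>
     (\<forall>b\<in>B. \<forall>c\<in>B. mul b c \<in> B) \<and>
     (tau_star sc invl T) closure_of B = UNIV \<and>
     (\<forall>b\<in>B. continuous_map T T (\<lambda>x. mul x b)) \<and>
     (\<forall>x. \<forall>b\<in>B. \<forall>c\<in>B. mul (invl b) (mul x c) = mul (mul (invl b) x) c)"

definition complex_linear_functional :: "(complex \<Rightarrow> 'a::ab_group_add \<Rightarrow> 'a) \<Rightarrow> ('a \<Rightarrow> complex) \<Rightarrow> bool"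
  where "complex_linear_functional sc \<omega> \<longleftrightarrow>
     (\<forall>x y. \<omega> (x + y) = \<omega> x + \<omega> y) \<and> (\<forall>c x. \<omega> (sc c x) = c * \<omega> x)"

definition B_positive :: "('a \<Rightarrow> 'a) \<Rightarrow> ('a \<Rightarrow> 'a \<Rightarrow> 'a) \<Rightarrow> 'a set \<Rightarrow> ('a \<Rightarrow> complex) \<Rightarrow> bool"
  where "B_positive invl mul B \<omega> \<longleftrightarrow>
     (\<forall>a\<in>B. Im (\<omega> (mul (invl a) a)) = 0 \<and> Re (\<omega> (mul (invl a) a)) \<ge> 0)"

text \<open>Norm in H_omega of lambda^0_omega(x), x \<in> B:
  ||lambda^0(x)||^2 = <lambda^0(x), lambda^0(x)> = omega(x^* x).\<close>
definition lambda0_norm :: "('a \<Rightarrow> 'a) \<Rightarrow> ('a \<Rightarrow> 'a \<Rightarrow> 'a) \<Rightarrow> ('a \<Rightarrow> complex) \<Rightarrow> 'a \<Rightarrow> real"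
  where "lambda0_norm invl mul \<omega> x = sqrt (Re (\<omega> (mul (invl x) x)))"

end

theory Submission
  imports Defs
begin

lemma istop_sn:
  fixes P :: "('a::ab_group_add \<Rightarrow> real) set"
  shows "istopology (\<lambda>U. \<forall>x\<in>U. \<exists>Q e. finite Q \<and> Q \<subseteq> P \<and> e > 0 \<and>
            {y. \<forall>q\<in>Q. q (y - x) < e} \<subseteq> U)"
  unfolding istopology_def
proof (intro conjI allI impI)
  fix S T assume S: "\<forall>x\<in>S. \<exists>Q e. finite Q \<and> Q \<subseteq> P \<and> e > 0 \<and> {y. \<forall>q\<in>Q. q (y - x) < e} \<subseteq> S"
    and T: "\<forall>x\<in>T. \<exists>Q e. finite Q \<and> Q \<subseteq> P \<and> e > 0 \<and> {y. \<forall>q\<in>Q. q (y - x) < e} \<subseteq> T"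
  show "\<forall>x\<in>S \<inter> T. \<exists>Q e. finite Q \<and> Q \<subseteq> P \<and> e > 0 \<and> {y. \<forall>q\<in>Q. q (y - x) < e} \<subseteq> S \<inter> T"
  proof
    fix x assume x: "x \<in> S \<inter> T"
    then have xs: "x \<in> S" and xt: "x \<in> T" by simp_all
    obtain Q1 e1 where 1: "finite Q1" "Q1 \<subseteq> P" "e1 > 0" "{y. \<forall>q\<in>Q1. q (y - x) < e1} \<subseteq> S"
      using S[rule_format, OF xs] by blast
    obtain Q2 e2 where 2: "finite Q2" "Q2 \<subseteq> P" "e2 > 0" "{y. \<forall>q\<in>Q2. q (y - x) < e2} \<subseteq> T"
      using T[rule_format, OF xt] by blast
    have sub: "{y. \<forall>q\<in>Q1 \<union> Q2. q (y - x) < min e1 e2} \<subseteq> S \<inter> T"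
    proof
      fix y assume "y \<in> {y. \<forall>q\<in>Q1 \<union> Q2. q (y - x) < min e1 e2}"
      then have "y \<in> {y. \<forall>q\<in>Q1. q (y - x) < e1}" "y \<in> {y. \<forall>q\<in>Q2. q (y - x) < e2}" by auto
      then show "y \<in> S \<inter> T" using 1(4) 2(4) by blast
    qed
    have f: "finite (Q1 \<union> Q2)" using 1(1) 2(1) by simp
    have p: "Q1 \<union> Q2 \<subseteq> P" using 1(2) 2(2) by simp
    have m: "min e1 e2 > 0" using 1(3) 2(3) by simp
    show "\<exists>Q e. finite Q \<and> Q \<subseteq> P \<and> e > 0 \<and> {y. \<forall>q\<in>Q. q (y - x) < e} \<subseteq> S \<inter> T"
      using f p m sub by (intro exI[of _ "Q1 \<union> Q2"] exI[of _ "min e1 e2"] conjI) assumption+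
  qed
next
  fix K assume K: "\<forall>U\<in>K. \<forall>x\<in>U. \<exists>Q e. finite Q \<and> Q \<subseteq> P \<and> e > 0 \<and> {y. \<forall>q\<in>Q. q (y - x) < e} \<subseteq> U"
  show "\<forall>x\<in>\<Union>K. \<exists>Q e. finite Q \<and> Q \<subseteq> P \<and> e > 0 \<and> {y. \<forall>q\<in>Q. q (y - x) < e} \<subseteq> \<Union>K"
  proof
    fix x assume "x \<in> \<Union>K"
    then obtain U where U: "U \<in> K" "x \<in> U" by blast
    obtain Q e where Q: "finite Q" "Q \<subseteq> P" "e > 0" "{y. \<forall>q\<in>Q. q (y - x) < e} \<subseteq> U"
      using K[rule_format, OF U] by blast
    have "U \<subseteq> \<Union>K" using U(1) by blast
    then have sub: "{y. \<forall>q\<in>Q. q (y - x) < e} \<subseteq> \<Union>K" using Q(4) by (rule_tac subset_trans) 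
    show "\<exists>Q e. finite Q \<and> Q \<subseteq> P \<and> e > 0 \<and> {y. \<forall>q\<in>Q. q (y - x) < e} \<subseteq> \<Union>K"
      using Q(1,2,3) sub by (intro exI[of _ Q] exI[of _ e] conjI) assumption+
  qed
qed

lemma openin_sn: "openin (seminorm_topology P) U \<longleftrightarrow> (\<forall>x\<in>U. \<exists>Q e. finite Q \<and> Q \<subseteq> P \<and> e > 0 \<and>
            {y. \<forall>q\<in>Q. q (y - x) < e} \<subseteq> U)"
  unfolding seminorm_topology_def topology_inverse'[OF istop_sn] by (rule refl)

lemma topspace_sn: "topspace (seminorm_topology P) = UNIV"
proof -
  have "openin (seminorm_topology P) UNIV" unfolding openin_sn
    by (intro ballI exI[of _ "{}"] exI[of _ "1::real"]) simp
  from openin_subset[OF this] show ?thesis by auto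
qed

lemma sn_open_ball:
  assumes "q \<in> P" "\<forall>x y. q (x + y) \<le> q x + q y"
  shows "openin (seminorm_topology P) {y. q y < e}"
  unfolding openin_sn
proof (intro ballI)
  fix x assume x: "x \<in> {y. q y < e}"
  have sub: "{y. \<forall>p\<in>{q}. p (y - x) < e - q x} \<subseteq> {y. q y < e}"
  proof
    fix y assume "y \<in> {y. \<forall>p\<in>{q}. p (y - x) < e - q x}"
    then have "q (y - x) < e - q x" by simp
    moreover have "q y \<le> q (y - x) + q x" using assms(2)[rule_format, of "y - x" x] by simp
    ultimately show "y \<in> {y. q y < e}" by simp
  qed
  have "finite {q}" "{q} \<subseteq> P" "e - q x > 0" using x assms(1) by simp_all
  with sub show "\<exists>Q e'. finite Q \<and> Q \<subseteq> P \<and> e' > 0 \<and> {y. \<forall>q\<in>Q. q (y - x) < e'} \<subseteq> {y. q y < e}"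
    by (intro exI[of _ "{q}"] exI[of _ "e - q x"] conjI) assumption+
qed

lemma sn_tendsto:
  assumes "limitin (seminorm_topology P) f 0 F" "q \<in> P" "\<forall>x y. q (x + y) \<le> q x + q y"
    "q 0 < e"
  shows "eventually (\<lambda>i. q (f i) < e) F"
proof -
  have "openin (seminorm_topology P) {y. q y < e}" by (rule sn_open_ball[OF assms(2,3)])
  then have "eventually (\<lambda>i. f i \<in> {y. q y < e}) F"
    using assms(1,4) unfolding limitin_def by blast
  then show ?thesis by simp
qed

lemma sn_cont:
  assumes "q \<in> P" "\<forall>x y. q (x + y) \<le> q x + q y" "\<forall>x. q (- x) = q x"
  shows "continuous_map (seminorm_topology P) euclideanreal q"
  unfolding continuous_map_def topspace_sn
proof (intro conjI allI impI)
  show "q \<in> UNIV \<rightarrow> topspace euclideanreal" by simp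
next
  fix V :: "real set" assume "openin euclideanreal V"
  then have V: "open V" by simp
  show "openin (seminorm_topology P) {x \<in> UNIV. q x \<in> V}"
    unfolding openin_sn
  proof (intro ballI)
    fix x assume "x \<in> {x \<in> UNIV. q x \<in> V}"
    then obtain r where r: "r > 0" "ball (q x) r \<subseteq> V" using V open_contains_ball by blast
    have sub: "{y. \<forall>q\<in>{q}. q (y - x) < r} \<subseteq> {x \<in> UNIV. q x \<in> V}"
    proof
      fix y assume "y \<in> {y. \<forall>q\<in>{q}. q (y - x) < r}"
      then have h: "q (y - x) < r" by simp
      have 1: "q y \<le> q (y - x) + q x" using assms(2)[rule_format, of "y - x" x] by simp
      have 2: "q x \<le> q (x - y) + q y" using assms(2)[rule_format, of "x - y" y] by simp
      have 3: "q (x - y) = q (y - x)" using assms(3)[rule_format, of "y - x"] by simp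
      have "q y - q x < r" "q x - q y < r" using h 1 2 3 by linarith+
      then have "dist (q x) (q y) < r" by (simp add: dist_real_def abs_less_iff)
      then have "q y \<in> ball (q x) r" by simp
      then show "y \<in> {x \<in> UNIV. q x \<in> V}" using r(2) by blast
    qed
    have "finite {q}" "{q} \<subseteq> P" using assms(1) by simp_all
    with sub r(1) show "\<exists>Q e. finite Q \<and> Q \<subseteq> P \<and> e > 0 \<and> {y. \<forall>q\<in>Q. q (y - x) < e} \<subseteq> {x \<in> UNIV. q x \<in> V}"
      by (intro exI[of _ "{q}"] exI[of _ r] conjI) assumption+
  qed
qed

lemma sn_limit:
  assumes "\<forall>q\<in>P. \<forall>e>0. eventually (\<lambda>i. q (f i) < e) F"
  shows "limitin (seminorm_topology P) f 0 F"
  unfolding limitin_def topspace_sn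
proof (intro conjI allI impI)
  show "0 \<in> UNIV" by simp
next
  fix U assume U: "openin (seminorm_topology P) U \<and> 0 \<in> U"
  then obtain Q e where Q: "finite Q" "Q \<subseteq> P" "e > 0" "{y. \<forall>q\<in>Q. q (y - 0) < e} \<subseteq> U"
    unfolding openin_sn by blast
  have "eventually (\<lambda>i. \<forall>q\<in>Q. q (f i) < e) F"
    using Q(1,2,3) assms by (intro eventually_ball_finite) blast+
  then show "eventually (\<lambda>i. f i \<in> U) F"
  proof (rule eventually_mono)
    fix i assume "\<forall>q\<in>Q. q (f i) < e"
    then have "f i \<in> {y. \<forall>q\<in>Q. q (y - 0) < e}" by simp
    then show "f i \<in> U" using Q(4) by blast
  qed
qed
lemma expand:
  assumes psa: "partial_star_algebra sc invl Gam mul" and BR: "B \<subseteq> univ_right_mult Gam"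
    and lin: "complex_linear_functional sc \<omega>" and x: "x \<in> B" and y: "y \<in> B"
  shows "\<omega> (mul (invl (x + sc c y)) (x + sc c y)) = \<omega> (mul (invl x) x) + c * \<omega> (mul (invl x) y)
     + cnj c * \<omega> (mul (invl y) x) + cnj c * c * \<omega> (mul (invl y) y)"
proof -
  have vs: "vector_space sc" and iadd: "\<forall>x y. invl (x + y) = invl x + invl y"
    and isc: "\<forall>c x. invl (sc c x) = sc (cnj c) (invl x)"
    using psa unfolding partial_star_algebra_def by blast+
  have rd: "\<And>x y z c d. (x, y) \<in> Gam \<Longrightarrow> (x, z) \<in> Gam \<Longrightarrow> mul x (sc c y + sc d z) = sc c (mul x y) + sc d (mul x z)"
    using psa unfolding partial_star_algebra_def by blast
  have ld: "\<And>x y z c d. (y, x) \<in> Gam \<Longrightarrow> (z, x) \<in> Gam \<Longrightarrow> mul (sc c y + sc d z) x = sc c (mul y x) + sc d (mul z x)"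
    using psa unfolding partial_star_algebra_def by blast
  interpret V: vector_space sc by (rule vs)
  have G: "\<And>z. (z, x) \<in> Gam" "\<And>z. (z, y) \<in> Gam" using BR x y unfolding univ_right_mult_def by auto
  have wadd: "\<And>u v. \<omega> (u + v) = \<omega> u + \<omega> v" and wsc: "\<And>c u. \<omega> (sc c u) = c * \<omega> u"
    using lin unfolding complex_linear_functional_def by blast+
  define z where "z = invl x + sc (cnj c) (invl y)"
  have inv: "invl (x + sc c y) = z" using iadd isc z_def by simp
  have 1: "mul z (x + sc c y) = mul z x + sc c (mul z y)"
    using rd[of z x y 1 c] G by simp
  have 2: "mul z x = mul (invl x) x + sc (cnj c) (mul (invl y) x)"
    using ld[of "invl x" x "invl y" 1 "cnj c"] G unfolding z_def by simp
  have 3: "mul z y = mul (invl x) y + sc (cnj c) (mul (invl y) y)"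
    using ld[of "invl x" y "invl y" 1 "cnj c"] G unfolding z_def by simp
  show ?thesis unfolding inv 1 2 3 by (simp add: wadd wsc algebra_simps)
qed

theorem proposition4p9:
  fixes sc :: "complex \<Rightarrow> 'a::ab_group_add \<Rightarrow> 'a"
    and invl :: "'a \<Rightarrow> 'a"
    and Gam :: "('a \<times> 'a) set"
    and mul :: "'a \<Rightarrow> 'a \<Rightarrow> 'a"
    and T :: "'a topology"
    and B :: "'a set"
    and \<omega> :: "'a \<Rightarrow> complex"
    and a :: "'i \<Rightarrow> 'a"
    and F :: "'i filter"
  assumes "topological_partial_star_algebra sc invl Gam mul T"
    and "multiplication_core sc invl Gam mul T B"
    and "complex_linear_functional sc \<omega>"
    and "continuous_map T euclidean \<omega>"
    and "B_positive invl mul B \<omega>"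
    and "\<forall>i. a i \<in> B"
    and "limitin (tau_star sc invl T) a 0 F"
    and "\<forall>e>0. \<forall>\<^sub>F (i, j) in F \<times>\<^sub>F F. lambda0_norm invl mul \<omega> (a i - a j) < e"
  shows "((\<lambda>i. lambda0_norm invl mul \<omega> (a i)) \<longlongrightarrow> 0) F"
proof -
  have psa: "partial_star_algebra sc invl Gam mul" and lct: "locally_convex_topology sc T"
    using assms(1) unfolding topological_partial_star_algebra_def by blast+
  obtain P where Psn: "\<forall>p\<in>P. seminorm_on sc p" and TP: "T = seminorm_topology P"
    using lct unfolding locally_convex_topology_def by blast
  have vs: "vector_space sc" and iadd: "\<forall>x y. invl (x + y) = invl x + invl y"
    and isc: "\<forall>c x. invl (sc c x) = sc (cnj c) (invl x)"
    using psa unfolding partial_star_algebra_def by blast+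
  have ld: "\<And>x y z c d. (y, x) \<in> Gam \<Longrightarrow> (z, x) \<in> Gam \<Longrightarrow> mul (sc c y + sc d z) x = sc c (mul y x) + sc d (mul z x)"
    using psa unfolding partial_star_algebra_def by blast
  interpret V: vector_space sc by (rule vs)
  have BR: "B \<subseteq> univ_right_mult Gam" and Badd: "\<forall>x\<in>B. \<forall>y\<in>B. x + y \<in> B"
    and Bsc: "\<forall>c. \<forall>x\<in>B. sc c x \<in> B"
    and contB: "\<forall>b\<in>B. continuous_map T T (\<lambda>x. mul x b)"
    using assms(2) unfolding multiplication_core_def by blast+
  have wadd: "\<And>u v. \<omega> (u + v) = \<omega> u + \<omega> v" and wsc: "\<And>c u. \<omega> (sc c u) = c * \<omega> u"
    using assms(3) unfolding complex_linear_functional_def by blast+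
  have w0: "\<omega> 0 = 0" using wadd[of 0 0] by simp
  have i0: "invl 0 = 0" using iadd[rule_format, of 0 0] by simp
  have pos: "\<And>x. x \<in> B \<Longrightarrow> Im (\<omega> (mul (invl x) x)) = 0 \<and> Re (\<omega> (mul (invl x) x)) \<ge> 0"
    using assms(5) unfolding B_positive_def by blast
  have Bsub: "\<And>x y. x \<in> B \<Longrightarrow> y \<in> B \<Longrightarrow> x - y \<in> B"
  proof -
    fix x y assume "x \<in> B" "y \<in> B"
    then have "x + sc (-1) y \<in> B" using Badd Bsc by blast
    then show "x - y \<in> B" by simp
  qed
  have psub: "\<And>p. p \<in> P \<Longrightarrow> \<forall>x y. p (x + y) \<le> p x + p y" using Psn unfolding seminorm_on_def by blast
  have psc: "\<And>p c x. p \<in> P \<Longrightarrow> p (sc c x) = norm c * p x" using Psn unfolding seminorm_on_def by blast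
  have pneg: "\<And>p. p \<in> P \<Longrightarrow> \<forall>x. p (- x) = p x"
  proof -
    fix p assume p: "p \<in> P"
    show "\<forall>x. p (- x) = p x"
    proof
      fix x show "p (- x) = p x" using psc[OF p, of "-1" x] by simp
    qed
  qed
  have p0: "\<And>p. p \<in> P \<Longrightarrow> p 0 = 0" using psc[of _ 0 0] by simp
  have step1: "limitin T (\<lambda>i. invl (a i)) 0 F" unfolding TP
  proof (rule sn_limit, intro ballI allI impI)
    fix q :: "'a \<Rightarrow> real" and e :: real assume q: "q \<in> P" and e: "e > 0"
    define q' where "q' = (\<lambda>x. max (q x) (q (invl x)))"
    have "seminorm_on sc q" using Psn q by blast
    moreover have "continuous_map T euclideanreal q"
      unfolding TP by (rule sn_cont[OF q psub[OF q] pneg[OF q]])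
    ultimately have q'in: "q' \<in> {(\<lambda>x. max (p x) (p (invl x))) | p. seminorm_on sc p \<and> continuous_map T euclideanreal p}"
      unfolding q'_def by blast
    have q'sub: "\<forall>x y. q' (x + y) \<le> q' x + q' y"
    proof (intro allI)
      fix x y
      have "q (x + y) \<le> q x + q y" using psub[OF q] by blast
      moreover have "q (invl (x + y)) \<le> q (invl x) + q (invl y)" using psub[OF q] iadd by simp
      ultimately show "q' (x + y) \<le> q' x + q' y" unfolding q'_def by linarith
    qed
    have q'0: "q' 0 < e" unfolding q'_def using p0[OF q] i0 e by simp
    have "eventually (\<lambda>i. q' (a i) < e) F"
      using sn_tendsto[OF assms(7)[unfolded tau_star_def] q'in q'sub q'0] .
    then show "eventually (\<lambda>i. q (invl (a i)) < e) F"
      by eventually_elim (simp add: q'_def)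
  qed
  have step2: "((\<lambda>i. \<omega> (mul (invl (a i)) b)) \<longlongrightarrow> 0) F" if b: "b \<in> B" for b
  proof -
    have cm: "continuous_map T euclidean ((\<lambda>x. \<omega> x) \<circ> (\<lambda>x. mul x b))"
      using continuous_map_compose[OF _ assms(4)] contB b by blast
    have Gb: "\<And>z. (z, b) \<in> Gam" using BR b unfolding univ_right_mult_def by auto
    have m0: "mul 0 b = 0" using ld[of 0 b 0 0 0] Gb by simp
    from continuous_map_limit[OF cm step1]
    show ?thesis by (simp add: o_def m0 w0)
  qed
  define qn where "qn x = Re (\<omega> (mul (invl x) x))" for x
  have herm: "Re (\<omega> (mul (invl x) y)) = Re (\<omega> (mul (invl y) x))" if x: "x \<in> B" and y: "y \<in> B" for x y
  proof -
    have "x + sc \<i> y \<in> B" using x y Badd Bsc by blast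
    then have "Im (\<omega> (mul (invl (x + sc \<i> y)) (x + sc \<i> y))) = 0" using pos by blast
    then show ?thesis unfolding expand[OF psa BR assms(3) x y, of \<i>] using pos[OF x] pos[OF y] by simp
  qed
  have diff: "qn (x - y) = qn x - 2 * Re (\<omega> (mul (invl y) x)) + qn y" if x: "x \<in> B" and y: "y \<in> B" for x y
  proof -
    have "x - y = x + sc (-1) y" by simp
    then have "qn (x - y) = Re (\<omega> (mul (invl x) x) + (-1) * \<omega> (mul (invl x) y)
     + cnj (-1) * \<omega> (mul (invl y) x) + cnj (-1) * (-1) * \<omega> (mul (invl y) y))"
      unfolding qn_def using expand[OF psa BR assms(3) x y, of "-1"] by simp
    then show ?thesis using herm[OF x y] unfolding qn_def by simp
  qed
  show ?thesis
  proof (cases "F = bot")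
    case True then show ?thesis by simp
  next
    case Fnb: False
    show ?thesis unfolding tendsto_iff
    proof (intro allI impI)
      fix e :: real assume e: "e > 0"
      have e2: "e / 2 > 0" using e by simp
      have "\<forall>\<^sub>F (i, j) in F \<times>\<^sub>F F. lambda0_norm invl mul \<omega> (a i - a j) < e / 2"
        using assms(8) e2 by blast
      then obtain Pf Pg where Pf: "eventually Pf F" and Pg: "eventually Pg F"
        and PP: "\<And>i j. Pf i \<Longrightarrow> Pg j \<Longrightarrow> lambda0_norm invl mul \<omega> (a i - a j) < e / 2"
        unfolding eventually_prod_filter by auto
      show "eventually (\<lambda>i. dist (lambda0_norm invl mul \<omega> (a i)) 0 < e) F"
        using Pf
      proof eventually_elim
        case (elim i)
        have "eventually (\<lambda>j. dist (\<omega> (mul (invl (a j)) (a i))) 0 < e^2 / 8) F"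
        proof -
          have e8: "e^2 / 8 > 0" using e by simp
          have "((\<lambda>j. \<omega> (mul (invl (a j)) (a i))) \<longlongrightarrow> 0) F" using step2 assms(6) by blast
          then show ?thesis using e8 unfolding tendsto_iff by blast
        qed
        then have "eventually (\<lambda>j. Pg j \<and> dist (\<omega> (mul (invl (a j)) (a i))) 0 < e^2 / 8) F"
          using Pg by (simp add: eventually_conj_iff)
        then obtain j where j1: "Pg j" and j2: "dist (\<omega> (mul (invl (a j)) (a i))) 0 < e^2 / 8"
          using eventually_happens'[OF Fnb] by blast
        have ai: "a i \<in> B" and aj: "a j \<in> B" using assms(6) by auto
        have l: "lambda0_norm invl mul \<omega> (a i - a j) < e / 2" using PP[OF elim j1] .
        have qd0: "qn (a i - a j) \<ge> 0" using pos[OF Bsub[OF ai aj]] unfolding qn_def by simp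
        have "sqrt (qn (a i - a j)) < e / 2" using l unfolding lambda0_norm_def qn_def .
        then have "(sqrt (qn (a i - a j)))^2 < (e / 2)^2"
          by (rule power_strict_mono) (use qd0 in auto)
        then have qd: "qn (a i - a j) < (e / 2)^2" using qd0 by simp
        have re: "Re (\<omega> (mul (invl (a j)) (a i))) \<le> e^2 / 8"
          using j2 complex_Re_le_cmod[of "\<omega> (mul (invl (a j)) (a i))"] by (simp add: dist_norm)
        have qj: "qn (a j) \<ge> 0" using pos[OF aj] unfolding qn_def by simp
        have qi0: "qn (a i) \<ge> 0" using pos[OF ai] unfolding qn_def by simp
        have ep: "e^2 > 0" using e by simp
        have e4: "(e / 2)^2 = e^2 / 4" by (simp add: power_divide)
        have "qn (a i) < e^2" using diff[OF ai aj] qd re qj ep e4 by linarith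
        then have "sqrt (qn (a i)) < sqrt (e^2)" by (simp only: real_sqrt_less_iff)
        then have "sqrt (qn (a i)) < e" using e by simp
        then show ?case unfolding lambda0_norm_def qn_def dist_real_def using qi0[unfolded qn_def] by simp
      qed
    qed
  qed
qed

end
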